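(* Let $l\ge2$ and let $H=[h_1,\dots,h_l]\in\mathbb{R}^{5\times l}$ be a structured embedding matrix. For every $1\le k<l$ there is a two-layer ReLU feed-forward network $\mathrm{FFN}:\mathbb{R}^5\to\mathbb{R}^5$ (applied token-wise) with all parameters bounded in absolute value by $O(l\|H\|_\infty)$ such that $$\mathrm{FFN}(h_t)=h_t\ \text{ for } 1\le t\le k,\qquad \mathrm{FFN}(h_t)=(0,0,\mathcal{I}_t^1,\mathcal{I}_t^2,1)^\top\ \text{ for } k<t\le l.$$ Likewise, there is such a network with $\mathrm{FFN}(h_t)=h_t$ for $k\le t\le l$ and $\mathrm{FFN}(h_t)=(0,0,\mathcal{I}_t^1,\mathcal{I}_t^2,1)^\top$ for $t<k$.
   Context: A two-layer ReLU feed-forward network is a map $h\mapsto W_2\sigma(W_1h+b_1)+b_2$ with $\sigma(x)=\max(0,x)$ entrywise. A structured embedding matrix $H\in\mathbb{R}^{5\times l}$ is one whose $t$-th column $h_t$ has entries $(h_t^3,h_t^4)=\mathcal{I}_t=(\cos(\tfrac{t}{l}\tfrac{\pi}{2}),\sin(\tfrac{t}{l}\tfrac{\pi}{2}))$ and $h_t^5=1$; $h_t^1,h_t^2$ are arbitrary. $\|H\|_\infty$ is the maximal absolute entry. *)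

theory Defs
  imports Complex_Main
begin

text \<open>Vectors in R^5 are functions nat => real, read on coordinates 1..5.
  The embedding matrix H is a function h :: nat => nat => real, column t (1..l), row i (1..5).\<close>

definition relu :: "real \<Rightarrow> real" where
  "relu x = max 0 x"

definition ffn :: "nat \<Rightarrow> (nat \<Rightarrow> nat \<Rightarrow> real) \<Rightarrow> (nat \<Rightarrow> real) \<Rightarrow>
    (nat \<Rightarrow> nat \<Rightarrow> real) \<Rightarrow> (nat \<Rightarrow> real) \<Rightarrow> (nat \<Rightarrow> real) \<Rightarrow> nat \<Rightarrow> real" where
  "ffn m W1 b1 W2 b2 x = (\<lambda>i. b2 i + (\<Sum>j<m. W2 i j * relu (b1 j + (\<Sum>r\<in>{1..5}. W1 j r * x r))))"

definition params_bounded :: "nat \<Rightarrow> (nat \<Rightarrow> nat \<Rightarrow> real) \<Rightarrow> (nat \<Rightarrow> real) \<Rightarrow>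
    (nat \<Rightarrow> nat \<Rightarrow> real) \<Rightarrow> (nat \<Rightarrow> real) \<Rightarrow> real \<Rightarrow> bool" where
  "params_bounded m W1 b1 W2 b2 B \<longleftrightarrow>
     (\<forall>j<m. \<forall>r\<in>{1..5}. \<bar>W1 j r\<bar> \<le> B) \<and> (\<forall>j<m. \<bar>b1 j\<bar> \<le> B) \<and>
     (\<forall>i\<in>{1..5}. \<forall>j<m. \<bar>W2 i j\<bar> \<le> B) \<and> (\<forall>i\<in>{1..5}. \<bar>b2 i\<bar> \<le> B)"

definition pos1 :: "nat \<Rightarrow> nat \<Rightarrow> real" where
  "pos1 l t = cos (real t / real l * (pi / 2))"
definition pos2 :: "nat \<Rightarrow> nat \<Rightarrow> real" where
  "pos2 l t = sin (real t / real l * (pi / 2))"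

definition structured :: "nat \<Rightarrow> (nat \<Rightarrow> nat \<Rightarrow> real) \<Rightarrow> bool" where
  "structured l h \<longleftrightarrow> (\<forall>t\<in>{1..l}. h t 3 = pos1 l t \<and> h t 4 = pos2 l t \<and> h t 5 = 1)"

definition Hinf :: "nat \<Rightarrow> (nat \<Rightarrow> nat \<Rightarrow> real) \<Rightarrow> real" where
  "Hinf l h = Max {\<bar>h t i\<bar> | t i. t \<in> {1..l} \<and> i \<in> {1..5}}"

definition erased :: "nat \<Rightarrow> nat \<Rightarrow> nat \<Rightarrow> real" where
  "erased l t i = (if i = 3 then pos1 l t else if i = 4 then pos2 l t else if i = 5 then 1 else 0)"

end

theory Submission imports Defs begin

lemma sum15: "(\<Sum>r\<in>{1..5::nat}. f r) = f 1 + f 2 + f 3 + f 4 + (f 5::real)"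
  by (simp add: numeral_eq_Suc atLeastAtMostSuc_conv add.commute add.left_commute)

lemma sum8: "(\<Sum>j<8::nat. f j) = f 0 + f 1 + f 2 + f 3 + f 4 + f 5 + f 6 + (f 7::real)"
  by (simp add: numeral_eq_Suc lessThan_Suc add.commute add.left_commute)

lemma sin_low: fixes y :: real assumes "0 \<le> y" "y \<le> 2" shows "y / 3 \<le> sin y"
proof -
  have "\<bar>sin y - (\<Sum>m<3. sin_coeff m * y ^ m)\<bar> \<le> inverse (fact 3) * \<bar>y\<bar> ^ 3"
    by (rule Maclaurin_sin_bound)
  moreover have "(\<Sum>m<3. sin_coeff m * y ^ m) = y"
    by (simp add: numeral_eq_Suc lessThan_Suc sin_coeff_def)
  moreover have "y ^ 3 \<le> 4 * y"
  proof -
    have "y^2 \<le> 4" using assms by (metis power_mono power2_eq_square mult_nonneg_nonneg numeral_times_numeral semiring_norm(12) semiring_norm(13) order_refl num_double)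
    then show ?thesis using assms by (metis mult.commute mult_right_mono power3_eq_cube power2_eq_square)
  qed
  ultimately have "\<bar>sin y - y\<bar> * 6 \<le> 4 * y" using assms by (simp add: fact_numeral)
  then show ?thesis by (simp add: abs_if split: if_splits)
qed

lemma Hinf_ge: assumes "t \<in> {1..l}" "i \<in> {1..5}" shows "\<bar>h t i\<bar> \<le> Hinf l h"
  unfolding Hinf_def
proof (rule Max_ge)
  show "finite {\<bar>h t i\<bar> |t i. t \<in> {1..l} \<and> i \<in> {1..5::nat}}"
    by (rule finite_image_set2) auto
  show "\<bar>h t i\<bar> \<in> {\<bar>h t i\<bar> |t i. t \<in> {1..l} \<and> i \<in> {1..5::nat}}" using assms by blast
qed

lemma sin_sign: fixes y L :: real
  assumes "1 \<le> L" "pi/(4*L) \<le> \<bar>y\<bar>" "\<bar>y\<bar> \<le> pi/2"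
  shows "(y < 0 \<longrightarrow> sin y \<le> -1/(6*L)) \<and> (0 < y \<longrightarrow> 1/(6*L) \<le> sin y)"
proof -
  have p: "\<bar>y\<bar> \<le> 2" using assms(3) pi_less_4 by linarith
  have a: "\<bar>y\<bar>/3 \<le> sin \<bar>y\<bar>" by (rule sin_low) (use p in auto)
  have "pi/(4*L) / 3 \<le> \<bar>y\<bar>/3" using assms(2) by simp
  moreover have "1/(6*L) \<le> pi/(4*L)/3" using pi_ge_two assms(1) by (simp add: field_simps)
  ultimately have b: "1/(6*L) \<le> sin \<bar>y\<bar>" using a by linarith
  show ?thesis
  proof (cases "y < 0")
    case True then have "sin \<bar>y\<bar> = - sin y" by simp
    then show ?thesis using b True by auto
  next
    case False then show ?thesis using b by auto
  qed
qed

lemma core: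
  fixes l :: nat and h :: "nat \<Rightarrow> nat \<Rightarrow> real" and d \<sigma> :: real
  assumes l2: "2 \<le> l" and st: "structured l h" and sg: "\<sigma> = 1 \<or> \<sigma> = -1"
    and dd: "\<forall>t\<in>{1..l}. 1/2 \<le> \<bar>real t - d\<bar> \<and> \<bar>real t - d\<bar> \<le> real l - 1/2"
  shows "\<exists>m W1 b1 W2 b2. params_bounded m W1 b1 W2 b2 (6 * real l * Hinf l h) \<and>
     (\<forall>t\<in>{1..l}. \<forall>i\<in>{1..5}. ffn m W1 b1 W2 b2 (h t) i =
         (if \<sigma> * (real t - d) < 0 then h t i else erased l t i))"
proof -
  define L where "L = real l"
  have L1: "1 \<le> L" using l2 by (simp add: L_def)
  define Hi where "Hi = Hinf l h"
  have Hx: "\<And>t i. t \<in> {1..l} \<Longrightarrow> i \<in> {1..5} \<Longrightarrow> \<bar>h t i\<bar> \<le> Hi"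
    unfolding Hi_def by (rule Hinf_ge)
  have Hi1: "1 \<le> Hi"
  proof -
    have "1 \<in> {1..l}" using l2 by simp
    then have "\<bar>h 1 5\<bar> \<le> Hi" by (intro Hx) auto
    moreover have "h 1 5 = 1" using st \<open>1 \<in> {1..l}\<close> unfolding structured_def by blast
    ultimately show ?thesis by simp
  qed
  define M where "M = 6 * L * Hi"
  have LH: "1*1 \<le> L*Hi" by (rule mult_mono) (use L1 Hi1 in auto)
  have M1: "1 \<le> M" using LH unfolding M_def by simp
  define \<phi> where "\<phi> = d / L * (pi/2)"
  define sp where "sp = sin \<phi>"
  define cp where "cp = cos \<phi>"
  define A where "A = M*\<sigma>*sp"
  define Cc where "Cc = M*\<sigma>*cp"
  define c3 where "c3 = (\<lambda>j::nat. if j < 4 then A else if j = 4 then 1 else if j = 5 then -1 else (0::real))"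
  define c4 where "c4 = (\<lambda>j::nat. if j < 4 then - Cc else if j = 6 then 1 else if j = 7 then -1 else (0::real))"
  define c1 where "c1 = (\<lambda>j::nat. if j = 0 then 1 else if j = 1 then -1 else (0::real))"
  define c2 where "c2 = (\<lambda>j::nat. if j = 2 then 1 else if j = 3 then -1 else (0::real))"
  define W1 where "W1 = (\<lambda>(j::nat) (r::nat). if r = 3 then c3 j else if r = 4 then c4 j
     else if r = 1 then c1 j else if r = 2 then c2 j else 0)"
  define d1 where "d1 = (\<lambda>j::nat. if j = 0 then 1/2 else if j = 1 then -1/2 else (0::real))"
  define d2 where "d2 = (\<lambda>j::nat. if j = 2 then 1/2 else if j = 3 then -1/2 else (0::real))"
  define d3 where "d3 = (\<lambda>j::nat. if j = 4 then 1 else if j = 5 then -1 else (0::real))"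
  define d4 where "d4 = (\<lambda>j::nat. if j = 6 then 1 else if j = 7 then -1 else (0::real))"
  define W2 where "W2 = (\<lambda>(i::nat) (j::nat). if i = 1 then d1 j else if i = 2 then d2 j
     else if i = 3 then d3 j else if i = 4 then d4 j else 0)"
  define b1 where "b1 = (\<lambda>j::nat. 0::real)"
  define b2 where "b2 = (\<lambda>i::nat. if i = 5 then 1 else (0::real))"
  have sig1: "\<bar>\<sigma>\<bar> = 1" using sg by auto
  have bnd1: "\<bar>A\<bar> \<le> M" using M1 sig1 unfolding A_def
    by (simp add: abs_mult sp_def mult_left_le)
  have bnd2: "\<bar>Cc\<bar> \<le> M" using M1 sig1 unfolding Cc_def
    by (simp add: abs_mult cp_def mult_left_le)
  have w1: "\<bar>W1 j r\<bar> \<le> M" for j r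
  proof -
    have "\<bar>c1 j\<bar> \<le> M" "\<bar>c2 j\<bar> \<le> M" "\<bar>c3 j\<bar> \<le> M" "\<bar>c4 j\<bar> \<le> M"
      unfolding c1_def c2_def c3_def c4_def using bnd1 bnd2 M1 by simp_all
    then show ?thesis unfolding W1_def using M1 by simp
  qed
  have w2: "\<bar>W2 i j\<bar> \<le> M" for i j
  proof -
    have "\<bar>d1 j\<bar> \<le> M" "\<bar>d2 j\<bar> \<le> M" "\<bar>d3 j\<bar> \<le> M" "\<bar>d4 j\<bar> \<le> M"
      unfolding d1_def d2_def d3_def d4_def using M1 by simp_all
    then show ?thesis unfolding W2_def using M1 by simp
  qed
  have PB: "params_bounded 8 W1 b1 W2 b2 M"
    unfolding params_bounded_def b1_def b2_def
    using w1 w2 M1 by auto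
  have main: "ffn 8 W1 b1 W2 b2 (h t) i = (if \<sigma> * (real t - d) < 0 then h t i else erased l t i)"
    if t: "t \<in> {1..l}" and i: "i \<in> {1..5}" for t i
  proof -
    define \<theta> where "\<theta> = real t / real l * (pi/2)"
    have h3: "h t 3 = cos \<theta>" and h4: "h t 4 = sin \<theta>" and h5: "h t 5 = 1"
      using st t unfolding structured_def pos1_def pos2_def \<theta>_def by auto
    define g where "g = A * h t 3 - Cc * h t 4"
    define y where "y = (real t - d) / L * (pi/2)"
    have gy: "g = - M * \<sigma> * sin y"
    proof -
      have "y = \<theta> - \<phi>" unfolding y_def \<theta>_def \<phi>_def L_def using l2 by (simp add: field_simps)
      then have "sin y = sin \<theta> * cp - cos \<theta> * sp" by (simp add: sin_diff sp_def cp_def)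
      then have e: "sp * cos \<theta> - cp * sin \<theta> = - sin y" by simp
      have "g = M*\<sigma>*(sp * cos \<theta> - cp * sin \<theta>)"
        unfolding g_def h3 h4 A_def Cc_def by (simp add: algebra_simps)
      with e show ?thesis by simp
    qed
    have dt: "1/2 \<le> \<bar>real t - d\<bar>" "\<bar>real t - d\<bar> \<le> L - 1/2" using dd t L_def by auto
    have Lp: "0 < L" using L1 by simp
    have ay: "\<bar>y\<bar> = \<bar>real t - d\<bar> / L * (pi/2)" unfolding y_def
      using Lp by (simp add: abs_mult abs_divide)
    have y1: "pi/(4*L) \<le> \<bar>y\<bar>"
    proof -
      have "1/2 / L * (pi/2) \<le> \<bar>real t - d\<bar> / L * (pi/2)"
        using dt(1) Lp by (intro mult_right_mono divide_right_mono) auto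
      then show ?thesis using ay by (simp add: field_simps)
    qed
    have y2: "\<bar>y\<bar> \<le> pi/2"
    proof -
      have "\<bar>real t - d\<bar> / L \<le> 1" using dt(2) Lp by (simp add: field_simps)
      then have "\<bar>real t - d\<bar> / L * (pi/2) \<le> 1 * (pi/2)"
        by (intro mult_right_mono) auto
      then show ?thesis using ay by simp
    qed
    have ss: "(y < 0 \<longrightarrow> sin y \<le> -1/(6*L)) \<and> (0 < y \<longrightarrow> 1/(6*L) \<le> sin y)"
      by (rule sin_sign[OF L1 y1 y2])
    have ysgn: "(y < 0) = (real t - d < 0)" "(0 < y) = (0 < real t - d)"
      unfolding y_def using Lp by (simp_all add: divide_less_0_iff zero_less_divide_iff zero_less_mult_iff mult_less_0_iff)
    have tne: "real t - d \<noteq> 0" using dt(1) by auto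
    have MLH: "M * (1/(6*L)) = Hi" unfolding M_def using Lp by simp
    have Mnn: "0 \<le> M" using M1 by simp
    have G: "(\<sigma> * (real t - d) < 0 \<longrightarrow> Hi \<le> g) \<and> (\<not> \<sigma> * (real t - d) < 0 \<longrightarrow> g \<le> - Hi)"
    proof -
      have key: "(\<sigma> * (real t - d) < 0 \<longrightarrow> \<sigma> * sin y \<le> -1/(6*L)) \<and>
                 (\<not> \<sigma> * (real t - d) < 0 \<longrightarrow> 1/(6*L) \<le> \<sigma> * sin y)"
        using sg ss ysgn tne by (auto simp: mult_less_0_iff)
      have "\<sigma> * (real t - d) < 0 \<Longrightarrow> Hi \<le> g"
      proof -
        assume a: "\<sigma> * (real t - d) < 0"
        have "M * (1/(6*L)) \<le> M * (- (\<sigma> * sin y))" using key a Mnn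
          by (intro mult_left_mono) auto
        then show ?thesis using MLH gy by (simp add: algebra_simps)
      qed
      moreover have "\<not> \<sigma> * (real t - d) < 0 \<Longrightarrow> g \<le> - Hi"
      proof -
        assume a: "\<not> \<sigma> * (real t - d) < 0"
        have "M * (1/(6*L)) \<le> M * (\<sigma> * sin y)" using key a Mnn
          by (intro mult_left_mono) auto
        then show ?thesis using MLH gy by (simp add: algebra_simps)
      qed
      ultimately show ?thesis by blast
    qed
    have x1: "\<bar>h t 1\<bar> \<le> Hi" and x2: "\<bar>h t 2\<bar> \<le> Hi" using Hx t by auto
    have ffn_eq: "ffn 8 W1 b1 W2 b2 (h t) i = b2 i +
        (W2 i 0 * relu (h t 1 + g) + W2 i 1 * relu (- h t 1 + g) + W2 i 2 * relu (h t 2 + g)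
        + W2 i 3 * relu (- h t 2 + g) + W2 i 4 * relu (h t 3) + W2 i 5 * relu (- h t 3)
        + W2 i 6 * relu (h t 4) + W2 i 7 * relu (- h t 4))"
      unfolding ffn_def sum8 sum15 b1_def g_def by (simp add: W1_def c1_def c2_def c3_def c4_def algebra_simps)
    have rr: "relu x - relu (-x) = x" for x unfolding relu_def by auto
    show ?thesis
    proof (cases "\<sigma> * (real t - d) < 0")
      case True
      then have "Hi \<le> g" using G by blast
      then have r: "relu (h t 1 + g) = h t 1 + g" "relu (- h t 1 + g) = - h t 1 + g"
         "relu (h t 2 + g) = h t 2 + g" "relu (- h t 2 + g) = - h t 2 + g"
        using x1 x2 unfolding relu_def by auto
      from i have "i = 1 \<or> i = 2 \<or> i = 3 \<or> i = 4 \<or> i = 5" by auto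
      then show ?thesis using True h5 rr[of "h t 3"] rr[of "h t 4"]
        unfolding ffn_eq r by (elim disjE) (simp_all add: W2_def b2_def d1_def d2_def d3_def d4_def field_simps)
    next
      case False
      then have "g \<le> - Hi" using G by blast
      then have r: "relu (h t 1 + g) = 0" "relu (- h t 1 + g) = 0"
         "relu (h t 2 + g) = 0" "relu (- h t 2 + g) = 0"
        using x1 x2 unfolding relu_def by auto
      from i have "i = 1 \<or> i = 2 \<or> i = 3 \<or> i = 4 \<or> i = 5" by auto
      then show ?thesis using False h3 h4 h5 rr[of "h t 3"] rr[of "h t 4"]
        unfolding ffn_eq r by (elim disjE) (simp_all add: W2_def b2_def d1_def d2_def d3_def d4_def erased_def pos1_def pos2_def \<theta>_def)
    qed
  qed
  show ?thesis
    using PB main unfolding M_def L_def Hi_def by blast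
qed

theorem lemma4:
  shows "\<exists>C>0. \<forall>l::nat. \<forall>h. \<forall>k::nat.
     2 \<le> l \<longrightarrow> structured l h \<longrightarrow> 1 \<le> k \<longrightarrow> k < l \<longrightarrow>
     (\<exists>m W1 b1 W2 b2. params_bounded m W1 b1 W2 b2 (C * real l * Hinf l h) \<and>
        (\<forall>t\<in>{1..k}. \<forall>i\<in>{1..5}. ffn m W1 b1 W2 b2 (h t) i = h t i) \<and>
        (\<forall>t\<in>{k<..l}. \<forall>i\<in>{1..5}. ffn m W1 b1 W2 b2 (h t) i = erased l t i)) \<and>
     (\<exists>m W1 b1 W2 b2. params_bounded m W1 b1 W2 b2 (C * real l * Hinf l h) \<and>
        (\<forall>t\<in>{k..l}. \<forall>i\<in>{1..5}. ffn m W1 b1 W2 b2 (h t) i = h t i) \<and>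
        (\<forall>t\<in>{1..<k}. \<forall>i\<in>{1..5}. ffn m W1 b1 W2 b2 (h t) i = erased l t i))"
proof (intro exI[of _ "6::real"] conjI allI impI)
  show "(0::real) < 6" by simp
  fix l :: nat and h and k :: nat
  assume l2: "2 \<le> l" and st: "structured l h" and k1: "1 \<le> k" and kl: "k < l"
  have dd1: "\<forall>t\<in>{1..l}. 1/2 \<le> \<bar>real t - (real k + 1/2)\<bar> \<and> \<bar>real t - (real k + 1/2)\<bar> \<le> real l - 1/2"
  proof
    fix t assume t: "t \<in> {1..l}"
    have "t \<le> k \<or> k + 1 \<le> t" by auto
    then have "real t \<le> real k \<or> real k + 1 \<le> real t" by (auto simp del: of_nat_add simp: of_nat_add[symmetric])
    moreover have "1 \<le> real t" "real t \<le> real l" "1 \<le> real k" "real k + 1 \<le> real l" using t k1 kl by auto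
    ultimately show "1/2 \<le> \<bar>real t - (real k + 1/2)\<bar> \<and> \<bar>real t - (real k + 1/2)\<bar> \<le> real l - 1/2"
      by auto
  qed
  have dd2: "\<forall>t\<in>{1..l}. 1/2 \<le> \<bar>real t - (real k - 1/2)\<bar> \<and> \<bar>real t - (real k - 1/2)\<bar> \<le> real l - 1/2"
  proof
    fix t assume t: "t \<in> {1..l}"
    have "t + 1 \<le> k \<or> k \<le> t" by auto
    then have "real t + 1 \<le> real k \<or> real k \<le> real t" by (auto simp del: of_nat_add simp: of_nat_add[symmetric])
    moreover have "1 \<le> real t" "real t \<le> real l" "1 \<le> real k" "real k + 1 \<le> real l" using t k1 kl by auto
    ultimately show "1/2 \<le> \<bar>real t - (real k - 1/2)\<bar> \<and> \<bar>real t - (real k - 1/2)\<bar> \<le> real l - 1/2"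
      by auto
  qed
  obtain m W1 b1 W2 b2 where P1: "params_bounded m W1 b1 W2 b2 (6 * real l * Hinf l h)"
    and E1: "\<forall>t\<in>{1..l}. \<forall>i\<in>{1..5}. ffn m W1 b1 W2 b2 (h t) i =
         (if 1 * (real t - (real k + 1/2)) < 0 then h t i else erased l t i)"
    using core[OF l2 st _ dd1, of 1] by auto
  show "\<exists>m W1 b1 W2 b2. params_bounded m W1 b1 W2 b2 (6 * real l * Hinf l h) \<and>
        (\<forall>t\<in>{1..k}. \<forall>i\<in>{1..5}. ffn m W1 b1 W2 b2 (h t) i = h t i) \<and>
        (\<forall>t\<in>{k<..l}. \<forall>i\<in>{1..5}. ffn m W1 b1 W2 b2 (h t) i = erased l t i)"
  proof (intro exI conjI)
    show "params_bounded m W1 b1 W2 b2 (6 * real l * Hinf l h)" by (rule P1)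
    show "\<forall>t\<in>{1..k}. \<forall>i\<in>{1..5}. ffn m W1 b1 W2 b2 (h t) i = h t i"
    proof (intro ballI)
      fix t i assume t: "t \<in> {1..k}" and i: "i \<in> {(1::nat)..5}"
      have "t \<in> {1..l}" using t kl by auto
      moreover have "real t \<le> real k" using t by auto
      ultimately show "ffn m W1 b1 W2 b2 (h t) i = h t i" using E1 i by auto
    qed
    show "\<forall>t\<in>{k<..l}. \<forall>i\<in>{1..5}. ffn m W1 b1 W2 b2 (h t) i = erased l t i"
    proof (intro ballI)
      fix t i assume t: "t \<in> {k<..l}" and i: "i \<in> {(1::nat)..5}"
      have "t \<in> {1..l}" using t k1 by auto
      moreover have "real k + 1 \<le> real t" using t by auto
      ultimately show "ffn m W1 b1 W2 b2 (h t) i = erased l t i" using E1 i by auto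
    qed
  qed
  obtain m' W1' b1' W2' b2' where P2: "params_bounded m' W1' b1' W2' b2' (6 * real l * Hinf l h)"
    and E2: "\<forall>t\<in>{1..l}. \<forall>i\<in>{1..5}. ffn m' W1' b1' W2' b2' (h t) i =
         (if (-1) * (real t - (real k - 1/2)) < 0 then h t i else erased l t i)"
    using core[OF l2 st _ dd2, of "-1"] by auto
  show "\<exists>m W1 b1 W2 b2. params_bounded m W1 b1 W2 b2 (6 * real l * Hinf l h) \<and>
        (\<forall>t\<in>{k..l}. \<forall>i\<in>{1..5}. ffn m W1 b1 W2 b2 (h t) i = h t i) \<and>
        (\<forall>t\<in>{1..<k}. \<forall>i\<in>{1..5}. ffn m W1 b1 W2 b2 (h t) i = erased l t i)"
  proof (intro exI conjI)
    show "params_bounded m' W1' b1' W2' b2' (6 * real l * Hinf l h)" by (rule P2)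
    show "\<forall>t\<in>{k..l}. \<forall>i\<in>{1..5}. ffn m' W1' b1' W2' b2' (h t) i = h t i"
    proof (intro ballI)
      fix t i assume t: "t \<in> {k..l}" and i: "i \<in> {(1::nat)..5}"
      have "t \<in> {1..l}" using t k1 by auto
      moreover have "real k \<le> real t" using t by auto
      ultimately show "ffn m' W1' b1' W2' b2' (h t) i = h t i" using E2 i by auto
    qed
    show "\<forall>t\<in>{1..<k}. \<forall>i\<in>{1..5}. ffn m' W1' b1' W2' b2' (h t) i = erased l t i"
    proof (intro ballI)
      fix t i assume t: "t \<in> {1..<k}" and i: "i \<in> {(1::nat)..5}"
      have "t \<in> {1..l}" using t kl by auto
      moreover have "real t + 1 \<le> real k" using t by auto
      ultimately show "ffn m' W1' b1' W2' b2' (h t) i = erased l t i" using E2 i by auto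
    qed
  qed
qed

end
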